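(* Let $\beta>0$ and let $(\lambda_n)_{n\in\mathbb{N}_0}$ be complex numbers with $\limsup_{n\to\infty}|\lambda_n|/n\le\beta$. Then for every $\varepsilon>0$ there is $\alpha>0$ such that $$n!\,|\Phi_{\Lambda_n}(z)|\le e^{\alpha|z|}\left(\frac{e^{(1+\varepsilon)\beta|z|}-1}{(1+\varepsilon)\beta}\right)^n$$ for all $n\in\mathbb{N}_0$ and all $z\in\mathbb{C}$. Consequently $\limsup_{n\to\infty}\sqrt[n]{n!|\Phi_{\Lambda_n}(z)|}\le\frac{e^{\beta|z|}-1}{\beta}$ for all $z\in\mathbb{C}$.
   Context: For $\lambda_0,\dots,\lambda_n\in\mathbb{C}$ the fundamental function is the entire function $\Phi_{(\lambda_0,\dots,\lambda_n)}(z)=\frac{1}{2\pi i}\int_{|w|=R}\frac{e^{zw}}{(w-\lambda_0)\cdots(w-\lambda_n)}\,dw$, where $R>\max_j|\lambda_j|$ and the circle is positively oriented. For a sequence $(\lambda_n)$, $\Lambda_n=(\lambda_0,\dots,\lambda_n)$ and $\Phi_{\Lambda_n}=\Phi_{(\lambda_0,\dots,\lambda_n)}$. *)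

theory Defs
  imports "HOL-Analysis.Analysis" "HOL-Library.Liminf_Limsup"
begin

text \<open>Radius of the integration circle: any R > max_j |lambda_j| works; we fix
  R = 1 + max_{j \<le> n} |lambda_j|.\<close>
definition fund_radius :: "(nat \<Rightarrow> complex) \<Rightarrow> nat \<Rightarrow> real" where
  "fund_radius lam n = 1 + Max ((\<lambda>j. cmod (lam j)) ` {..n})"

text \<open>Fundamental function Phi_{Lambda_n}(z) = (1/(2 pi i)) times the contour integral
  over the positively oriented circle |w| = R of e^{zw} / prod_{j\<le>n} (w - lambda_j),
  written out via the parametrisation w(t) = R e^{2 pi i t}, t in [0,1],
  with w'(t) = 2 pi i w(t).\<close>
definition fund_fun :: "(nat \<Rightarrow> complex) \<Rightarrow> nat \<Rightarrow> complex \<Rightarrow> complex" where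
  "fund_fun lam n z =
     (let R = fund_radius lam n in
      (1 / (2 * of_real pi * \<i>)) *
      integral {0..1} (\<lambda>t::real.
        let w = of_real R * exp (2 * of_real pi * \<i> * of_real t) in
          exp (z * w) / (\<Prod>j\<le>n. (w - lam j)) * (2 * of_real pi * \<i> * w)))"

end

theory Submission
  imports Defs
begin

definition ee :: "real \<Rightarrow> complex" where
  "ee t = exp (2 * complex_of_real pi * \<i> * complex_of_real t)"

lemma norm_ee [simp]: "norm (ee t) = 1"
  unfolding ee_def by (simp add: norm_exp_eq_Re)

lemma ee_0 [simp]: "ee 0 = 1" and ee_1 [simp]: "ee 1 = 1"
  unfolding ee_def by (simp_all add: exp_eq_1)

lemma continuous_on_ee [continuous_intros]:
  "continuous_on S f \<Longrightarrow> continuous_on S (\<lambda>x. ee (f x))"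
  unfolding ee_def by (intro continuous_intros)

lemma vd_cx:
  assumes "(f has_field_derivative f') (at (of_real a))" "\<And>x. g x = f (of_real x)"
  shows "(g has_vector_derivative f') (at a within s)"
proof -
  have "g = (\<lambda>x. f (of_real x))" using assms(2) by auto
  then show ?thesis using has_vector_derivative_real_field[OF assms(1)] by simp
qed

definition PP :: "(nat \<Rightarrow> complex) \<Rightarrow> nat \<Rightarrow> complex \<Rightarrow> complex" where
  "PP lam m w = (\<Prod>j<m. w - lam j)"

definition ig :: "(nat \<Rightarrow> complex) \<Rightarrow> nat \<Rightarrow> real \<Rightarrow> complex \<Rightarrow> real \<Rightarrow> complex" where
  "ig lam m R z t = exp (z * (of_real R * ee t)) / PP lam m (of_real R * ee t) * (of_real R * ee t)"

definition Q :: "(nat \<Rightarrow> complex) \<Rightarrow> nat \<Rightarrow> real \<Rightarrow> complex \<Rightarrow> complex" where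
  "Q lam m R z = integral {0..1} (ig lam m R z)"

lemma PP_nonzero:
  assumes "\<forall>j<m. cmod (lam j) < cmod w"
  shows "PP lam m w \<noteq> 0"
  using assms unfolding PP_def by (auto simp: prod_zero_iff)

lemma PP_nonzero_R:
  assumes "\<forall>j<m. cmod (lam j) < R"
  shows "PP lam m (of_real R * ee t) \<noteq> 0"
proof (cases "m = 0")
  case True then show ?thesis by (simp add: PP_def)
next
  case False
  then have "cmod (lam 0) < R" using assms by simp
  then have "R > 0" using norm_ge_zero[of "lam 0"] by linarith
  then show ?thesis using assms by (intro PP_nonzero) (simp add: norm_mult)
qed

lemma continuous_on_PP [continuous_intros]:
  "continuous_on S f \<Longrightarrow> continuous_on S (\<lambda>x. PP lam m (f x))"
  unfolding PP_def by (intro continuous_intros)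

lemma cont_ig:
  assumes "\<forall>j<m. cmod (lam j) < R"
  shows "continuous_on S (\<lambda>t. ig lam m R z t)"
  unfolding ig_def by (intro continuous_intros) (auto simp: PP_nonzero_R[OF assms])

lemma ig_deriv:
  "((\<lambda>x. ig lam m R x t) has_field_derivative of_real R * ee t * ig lam m R x t) (at x within S)"
proof -
  define w where "w = of_real R * ee t"
  define c where "c = w / PP lam m w"
  have e: "ig lam m R y t = exp (y * w) * c" for y unfolding ig_def w_def c_def by simp
  have d: "((\<lambda>x. exp (x * w)) has_field_derivative exp (x * w) * w) (at x within S)"
    by (auto intro!: derivative_eq_intros)
  show ?thesis unfolding e using DERIV_cmult_right[OF d, of c] by (simp add: w_def mult_ac)
qed

lemma int_ig:
  assumes "\<forall>j<m. cmod (lam j) < R"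
  shows "ig lam m R z integrable_on {0..1}"
  using cont_ig[OF assms] by (intro integrable_continuous_interval) auto

lemma Q_deriv:
  assumes "\<forall>j<m. cmod (lam j) < R"
  shows "(Q lam m R has_field_derivative
           integral {0..1} (\<lambda>t. (of_real R * ee t) * ig lam m R z t)) (at z)"
proof -
  have "((\<lambda>z. integral (cbox 0 1) (ig lam m R z)) has_field_derivative
           integral (cbox 0 1) (\<lambda>t. (of_real R * ee t) * ig lam m R z t)) (at z within UNIV)"
  proof (rule leibniz_rule_field_derivative[where fx = "\<lambda>z t. (of_real R * ee t) * ig lam m R z t"])
    fix x :: complex and t :: real
    show "((\<lambda>x. ig lam m R x t) has_field_derivative of_real R * ee t * ig lam m R x t) (at x within UNIV)"
      by (rule ig_deriv)
  next
    fix x show "ig lam m R x integrable_on cbox 0 1" using int_ig[OF assms] by simp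
  next
    have "continuous_on (UNIV \<times> cbox 0 1) (\<lambda>p. of_real R * ee (snd p) * ig lam m R (fst p) (snd p))"
      unfolding ig_def by (intro continuous_intros) (auto simp: PP_nonzero_R[OF assms])
    then show "continuous_on (UNIV \<times> cbox 0 1) (\<lambda>(x, t). of_real R * ee t * ig lam m R x t)"
      by (simp add: case_prod_beta')
  qed auto
  moreover have "Q lam m R = (\<lambda>z. integral {0..1} (ig lam m R z))" by (simp add: Q_def fun_eq_iff)
  ultimately show ?thesis by simp
qed

lemma Q_ode:
  assumes "\<forall>j<Suc k. cmod (lam j) < R"
  shows "integral {0..1} (\<lambda>t. (of_real R * ee t) * ig lam (Suc k) R z t) - lam k * Q lam (Suc k) R z
           = Q lam k R z"
proof -
  have a2: "\<forall>j<k. cmod (lam j) < R" using assms by auto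
  have i1: "(\<lambda>t. (of_real R * ee t) * ig lam (Suc k) R z t) integrable_on {0..1}"
    by (intro integrable_continuous_interval continuous_on_mult continuous_on_const cont_ig[OF assms] continuous_on_ee continuous_on_of_real continuous_on_id)
  have i2: "(\<lambda>t. lam k * ig lam (Suc k) R z t) integrable_on {0..1}"
    by (intro integrable_continuous_interval continuous_on_mult continuous_on_const cont_ig[OF assms] continuous_on_ee continuous_on_of_real continuous_on_id)
  have "integral {0..1} (\<lambda>t. (of_real R * ee t) * ig lam (Suc k) R z t) - lam k * Q lam (Suc k) R z
     = integral {0..1} (\<lambda>t. (of_real R * ee t) * ig lam (Suc k) R z t - lam k * ig lam (Suc k) R z t)"
    unfolding Q_def by (subst integral_diff[OF i1 i2]) simp
  also have "\<dots> = integral {0..1} (ig lam k R z)"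
  proof (rule integral_cong)
    fix t :: real
    define w where "w = of_real R * ee t"
    have n1: "PP lam k w \<noteq> 0" using PP_nonzero_R[OF a2] w_def by simp
    have "cmod (lam k) < R" using assms by simp
    then have Rp: "R > 0" using norm_ge_zero[of "lam k"] by linarith
    have nw: "cmod w = R" using Rp by (simp add: w_def norm_mult)
    have n2: "w - lam k \<noteq> 0" using assms nw by auto
    have PPS: "PP lam (Suc k) w = PP lam k w * (w - lam k)" by (simp add: PP_def)
    show "of_real R * ee t * ig lam (Suc k) R z t - lam k * ig lam (Suc k) R z t = ig lam k R z t"
    proof -
      define E where "E = exp (z * w)"
      have "w * (E / (PP lam k w * (w - lam k)) * w) - lam k * (E / (PP lam k w * (w - lam k)) * w)
          = (w - lam k) * (E / (PP lam k w * (w - lam k)) * w)" by (rule left_diff_distrib[symmetric])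
      also have "\<dots> = E / PP lam k w * w" using n1 n2 by (simp add: field_simps)
      finally show ?thesis unfolding ig_def w_def[symmetric] PPS E_def .
    qed
  qed
  finally show ?thesis by (simp add: Q_def)
qed

lemma Q_zero: "Q lam 0 R z = 0"
proof -
  have ig0: "ig lam 0 R z t = exp (z * (of_real R * ee t)) * (of_real R * ee t)" for t
    by (simp add: ig_def PP_def)
  have ig00: "ig lam 0 R 0 t = of_real R * ee t" for t
    by (simp add: ig_def PP_def)
  define G where "G t = (if z = 0 then of_real R * ee t / (2 * of_real pi * \<i>)
                         else exp (z * (of_real R * ee t)) / (2 * of_real pi * \<i> * z))" for t
  have "(G has_vector_derivative ig lam 0 R z t) (at t within {0..1})" for t
  proof (cases "z = 0")
    case True
    show ?thesis
      by (rule vd_cx[where f = "\<lambda>u. of_real R * exp (2 * complex_of_real pi * \<i> * u) / (2 * of_real pi * \<i>)"])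
         (auto intro!: derivative_eq_intros simp: G_def ig00 True ee_def algebra_simps)
  next
    case False
    show ?thesis
      by (rule vd_cx[where f = "\<lambda>u. exp (z * (of_real R * exp (2 * complex_of_real pi * \<i> * u))) / (2 * of_real pi * \<i> * z)"])
         (auto intro!: derivative_eq_intros simp: G_def ig0 False ee_def)
  qed
  then have "(ig lam 0 R z has_integral (G 1 - G 0)) {0..1}"
    by (intro fundamental_theorem_of_calculus) auto
  then show ?thesis by (simp add: Q_def G_def integral_unique)
qed


definition DP :: "(nat \<Rightarrow> complex) \<Rightarrow> nat \<Rightarrow> complex \<Rightarrow> complex" where
  "DP lam m w = (\<Sum>i<m. \<Prod>j\<in>{..<m}-{i}. w - lam j)"

definition gg :: "(nat \<Rightarrow> complex) \<Rightarrow> nat \<Rightarrow> complex \<Rightarrow> complex" where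
  "gg lam m w = w / PP lam m w"

definition gd :: "(nat \<Rightarrow> complex) \<Rightarrow> nat \<Rightarrow> complex \<Rightarrow> complex" where
  "gd lam m w = (PP lam m w - w * DP lam m w) / (PP lam m w * PP lam m w)"

lemma continuous_on_DP [continuous_intros]:
  "continuous_on S f \<Longrightarrow> continuous_on S (\<lambda>x. DP lam m (f x))"
  unfolding DP_def by (intro continuous_intros)

lemma PP_deriv: "(PP lam m has_field_derivative DP lam m w) (at w)"
proof -
  have "((\<lambda>u. \<Prod>j\<in>{..<m}. u - lam j) has_field_derivative
          (\<Sum>i\<in>{..<m}. 1 * (\<Prod>j\<in>{..<m}-{i}. w - lam j))) (at w)"
    by (rule has_field_derivative_prod) (auto intro!: derivative_eq_intros)
  then show ?thesis by (simp add: PP_def[abs_def] DP_def)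
qed

lemma gg_deriv:
  assumes "PP lam m w \<noteq> 0"
  shows "(gg lam m has_field_derivative gd lam m w) (at w)"
proof -
  have "((\<lambda>w. w / PP lam m w) has_field_derivative
         (1 * PP lam m w - w * DP lam m w) / (PP lam m w * PP lam m w)) (at w)"
    by (rule DERIV_divide[OF DERIV_ident PP_deriv]) (rule assms)
  then show ?thesis by (simp add: gg_def[abs_def] gd_def)
qed

lemma nz_half:
  assumes "\<rho> < Re x" "\<forall>j<m. cmod (lam j) \<le> \<rho>"
  shows "PP lam m (x * ee t) \<noteq> 0"
proof (rule PP_nonzero)
  have "Re x \<le> cmod x" by (rule complex_Re_le_cmod)
  then show "\<forall>j<m. cmod (lam j) < cmod (x * ee t)" using assms by (auto simp: norm_mult)
qed

lemma mv_zero: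
  assumes "\<forall>j<m. cmod (lam j) < cmod s" "s \<noteq> 0"
  shows "integral {0..1} (\<lambda>t. gd lam m (s * ee t) * ee t) = 0"
proof -
  have nz: "PP lam m (s * ee t) \<noteq> 0" for t by (rule PP_nonzero) (simp add: norm_mult assms)
  define G where "G x = gg lam m (s * ee x)" for x
  have "(G has_vector_derivative gd lam m (s * ee t) * (s * (2 * of_real pi * \<i> * ee t))) (at t within {0..1})" for t
  proof (rule vd_cx[where f = "\<lambda>u. gg lam m (s * exp (2 * of_real pi * \<i> * u))"])
    have inner: "((\<lambda>u. s * exp (2 * of_real pi * \<i> * u)) has_field_derivative
                   s * (2 * of_real pi * \<i> * ee t)) (at (of_real t))"
      by (auto intro!: derivative_eq_intros simp: ee_def mult_ac)
    have gdt: "(gg lam m has_field_derivative gd lam m (s * ee t))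
                 (at (s * exp (2 * of_real pi * \<i> * of_real t)))"
      using gg_deriv[OF nz[of t]] by (simp add: ee_def)
    show "((\<lambda>u. gg lam m (s * exp (2 * of_real pi * \<i> * u))) has_field_derivative
            gd lam m (s * ee t) * (s * (2 * of_real pi * \<i> * ee t))) (at (of_real t))"
      using DERIV_chain2[OF gdt inner] by simp
  next
    fix x show "G x = gg lam m (s * exp (2 * of_real pi * \<i> * of_real x))" by (simp add: G_def ee_def)
  qed
  then have "((\<lambda>t. gd lam m (s * ee t) * (s * (2 * of_real pi * \<i> * ee t))) has_integral (G 1 - G 0)) {0..1}"
    by (intro fundamental_theorem_of_calculus) auto
  then have i0: "integral {0..1} (\<lambda>t. gd lam m (s * ee t) * (s * (2 * of_real pi * \<i> * ee t))) = 0"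
    by (simp add: G_def integral_unique)
  have eq: "gd lam m (s * ee t) * (s * (2 * of_real pi * \<i> * ee t))
          = (s * (2 * of_real pi * \<i>)) * (gd lam m (s * ee t) * ee t)" for t
    by (simp add: mult_ac)
  have "(s * (2 * of_real pi * \<i>)) * integral {0..1} (\<lambda>t. gd lam m (s * ee t) * ee t) = 0"
    using i0 unfolding eq by simp
  then show ?thesis using assms(2) by simp
qed

lemma I_const:
  assumes "\<rho> \<ge> 0" "\<forall>j<m. cmod (lam j) \<le> \<rho>"
  shows "\<exists>c. \<forall>s\<in>{s. \<rho> < Re s}. integral {0..1} (\<lambda>t. gg lam m (s * ee t)) = c"
proof (rule has_field_derivative_zero_constant[OF convex_halfspace_Re_gt])
  fix s0 assume s0: "s0 \<in> {s. \<rho> < Re s}"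
  have lr: "((\<lambda>s. integral (cbox 0 1) (\<lambda>t. gg lam m (s * ee t))) has_field_derivative
          integral (cbox 0 1) (\<lambda>t. gd lam m (s0 * ee t) * ee t)) (at s0 within {s. \<rho> < Re s})"
  proof (rule leibniz_rule_field_derivative[where fx = "\<lambda>s t. gd lam m (s * ee t) * ee t"])
    fix x t assume x: "x \<in> {s. \<rho> < Re s}"
    have nz: "PP lam m (x * ee t) \<noteq> 0" using x assms by (intro nz_half[where \<rho>=\<rho>]) auto
    have inner: "((\<lambda>x. x * ee t) has_field_derivative ee t) (at x within {s. \<rho> < Re s})"
      by (auto intro!: derivative_eq_intros)
    show "((\<lambda>x. gg lam m (x * ee t)) has_field_derivative gd lam m (x * ee t) * ee t) (at x within {s. \<rho> < Re s})"
      using DERIV_chain2[OF gg_deriv[OF nz] inner] .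
  next
    fix x assume x: "x \<in> {s. \<rho> < Re s}"
    have xr: "\<rho> < Re x" using x by simp
    have "continuous_on (cbox 0 1) (\<lambda>t. gg lam m (x * ee t))"
      unfolding gg_def by (intro continuous_intros) (auto simp: nz_half[OF xr assms(2)])
    then show "(\<lambda>t. gg lam m (x * ee t)) integrable_on cbox 0 1" by (rule integrable_continuous)
  next
    have "continuous_on ({s. \<rho> < Re s} \<times> cbox 0 1) (\<lambda>p. gd lam m (fst p * ee (snd p)) * ee (snd p))"
      unfolding gd_def by (intro continuous_intros) (auto simp: nz_half[OF _ assms(2)])
    then show "continuous_on ({s. \<rho> < Re s} \<times> cbox 0 1) (\<lambda>(x, t). gd lam m (x * ee t) * ee t)"
      by (simp add: case_prod_beta')
  qed (use s0 convex_halfspace_Re_gt in auto)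
  have "Re s0 \<le> cmod s0" by (rule complex_Re_le_cmod)
  then have "\<forall>j<m. cmod (lam j) < cmod s0" "s0 \<noteq> 0" using s0 assms by auto
  from mv_zero[OF this] lr
  show "((\<lambda>s. integral {0..1} (\<lambda>t. gg lam m (s * ee t))) has_field_derivative 0) (at s0 within {s. \<rho> < Re s})"
    by simp
qed

lemma gg_bound:
  assumes "\<forall>j<Suc k. cmod (lam j) \<le> \<rho>" "\<rho> \<ge> 0" "\<tau> \<ge> \<rho>" "\<tau> \<ge> 1" "cmod w = \<rho> + \<tau>"
  shows "cmod (gg lam (Suc k) w - (if k = 0 then 1 else 0)) \<le> 2 * (\<rho> + 1) / \<tau>"
proof -
  have d: "cmod (w - lam j) \<ge> \<tau>" if "j < Suc k" for j
  proof -
    have "cmod w - cmod (lam j) \<le> cmod (w - lam j)" by (rule norm_triangle_ineq2)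
    then show ?thesis using assms(1) that assms(5) by force
  qed
  show ?thesis
  proof (cases "k = 0")
    case True
    have d0: "cmod (w - lam 0) \<ge> \<tau>" using d by simp
    then have nz: "w - lam 0 \<noteq> 0" using assms(4) by auto
    have "gg lam (Suc k) w - 1 = lam 0 / (w - lam 0)"
      using nz True by (simp add: gg_def PP_def field_simps)
    then have "cmod (gg lam (Suc k) w - 1) = cmod (lam 0) / cmod (w - lam 0)" by (simp add: norm_divide)
    also have "\<dots> \<le> \<rho> / \<tau>"
      using assms(1,2) d0 assms(4) by (intro frac_le) auto
    also have "\<dots> \<le> 2 * (\<rho> + 1) / \<tau>" using assms(2,4) by (intro divide_right_mono) auto
    finally show ?thesis using True by simp
  next
    case False
    have "\<tau> ^ Suc k = (\<Prod>j<Suc k. \<tau>)" by simp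
    also have "\<dots> \<le> (\<Prod>j<Suc k. cmod (w - lam j))"
      using d assms(4) by (intro prod_mono) auto
    also have "\<dots> = cmod (PP lam (Suc k) w)" by (simp add: PP_def prod_norm)
    finally have p1: "\<tau> ^ Suc k \<le> cmod (PP lam (Suc k) w)" .
    have "\<tau> ^ 2 \<le> \<tau> ^ Suc k" using False assms(4) by (intro power_increasing) auto
    with p1 have p2: "\<tau> ^ 2 \<le> cmod (PP lam (Suc k) w)" by linarith
    have tp: "\<tau> > 0" using assms(4) by linarith
    have "cmod (gg lam (Suc k) w) = cmod w / cmod (PP lam (Suc k) w)" by (simp add: gg_def norm_divide)
    also have "\<dots> \<le> (\<rho> + \<tau>) / \<tau> ^ 2"
      using p2 tp assms(5) assms(2) by (intro frac_le) auto
    also have "\<dots> \<le> (2 * \<tau>) / \<tau> ^ 2" using assms(3) tp by (intro divide_right_mono) auto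
    also have "\<dots> = 2 / \<tau>" using tp by (simp add: power2_eq_square)
    also have "\<dots> \<le> 2 * (\<rho> + 1) / \<tau>" using assms(2) tp by (intro divide_right_mono) auto
    finally show ?thesis using False by simp
  qed
qed

lemma Q_at0:
  assumes "\<forall>j\<le>k. cmod (lam j) < R"
  shows "Q lam (Suc k) R 0 = (if k = 0 then 1 else 0)"
proof -
  define \<rho> where "\<rho> = Max ((\<lambda>j. cmod (lam j)) ` {..k})"
  have h\<rho>: "\<forall>j<Suc k. cmod (lam j) \<le> \<rho>" by (auto simp: \<rho>_def less_Suc_eq_le intro!: Max_ge)
  have "cmod (lam 0) \<le> \<rho>" using h\<rho> by simp
  then have \<rho>0: "\<rho> \<ge> 0" using norm_ge_zero[of "lam 0"] by linarith
  have "\<rho> \<in> (\<lambda>j. cmod (lam j)) ` {..k}" unfolding \<rho>_def by (intro Max_in) auto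
  then have \<rho>R: "\<rho> < R" using assms by auto
  obtain c where hc: "\<forall>s\<in>{s. \<rho> < Re s}. integral {0..1} (\<lambda>t. gg lam (Suc k) (s * ee t)) = c"
    using I_const[OF \<rho>0 h\<rho>] by blast
  have QI: "Q lam (Suc k) R' 0 = integral {0..1} (\<lambda>t. gg lam (Suc k) (of_real R' * ee t))" for R'
    by (simp add: Q_def ig_def[abs_def] gg_def)
  have Qc: "Q lam (Suc k) R' 0 = c" if "\<rho> < R'" for R' using hc QI that by simp
  define T where "T = (if k = 0 then 1 else (0::complex))"
  have bound: "cmod (c - T) \<le> 2 * (\<rho> + 1) / \<tau>" if \<tau>: "\<tau> \<ge> \<rho>" "\<tau> \<ge> 1" for \<tau>
  proof -
    define R' where "R' = \<rho> + \<tau>"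
    have R'p: "\<rho> < R'" using \<tau> R'_def by simp
    have nz: "\<forall>j<Suc k. cmod (lam j) < R'" using h\<rho> R'p by force
    have ci: "continuous_on {0..1} (\<lambda>t. gg lam (Suc k) (of_real R' * ee t))"
      unfolding gg_def using PP_nonzero_R[OF nz] by (intro continuous_intros) auto
    have "((\<lambda>t. gg lam (Suc k) (of_real R' * ee t)) has_integral c) {0..1}"
      using integrable_integral[OF integrable_continuous_interval[OF ci]] Qc[OF R'p] QI by simp
    then have hi: "((\<lambda>t. gg lam (Suc k) (of_real R' * ee t) - T) has_integral (c - T)) {0..1}"
      using has_integral_diff[OF _ has_integral_const_real[of T 0 1]] by force
    have B0: "0 \<le> 2 * (\<rho> + 1) / \<tau>" using \<rho>0 \<tau> by simp
    have hb: "cmod (gg lam (Suc k) (of_real R' * ee t) - T) \<le> 2 * (\<rho> + 1) / \<tau>"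
      if "t \<in> {0..1} - {}" for t
    proof -
      have "cmod (of_real R' * ee t) = R'" using R'p \<rho>0 by (simp add: norm_mult)
      then have "cmod (of_real R' * ee t) = \<rho> + \<tau>" using R'_def by simp
      from gg_bound[OF h\<rho> \<rho>0 \<tau> this]
      show ?thesis by (simp add: T_def)
    qed
    show ?thesis using has_integral_bound_real[OF B0 finite.emptyI hi hb] by simp
  qed
  have "c = T"
  proof (rule ccontr)
    assume "c \<noteq> T"
    then have dp: "cmod (c - T) > 0" by simp
    define \<tau> where "\<tau> = max \<rho> 1 + 2 * (\<rho> + 1) / cmod (c - T) + 1"
    have "2 * (\<rho> + 1) / cmod (c - T) \<ge> 0" using \<rho>0 by simp
    then have t1: "\<tau> \<ge> \<rho>" "\<tau> \<ge> 1" "2 * (\<rho> + 1) / cmod (c - T) < \<tau>" unfolding \<tau>_def by auto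
    have "2 * (\<rho> + 1) < \<tau> * cmod (c - T)" using t1(3) dp by (simp add: pos_divide_less_eq)
    then have "2 * (\<rho> + 1) / \<tau> < cmod (c - T)" using t1(2) by (simp add: pos_divide_less_eq mult.commute)
    with bound[OF t1(1,2)] show False by linarith
  qed
  then show ?thesis using Qc[OF \<rho>R] T_def by simp
qed


lemma Q_repr:
  assumes "\<forall>j\<le>k. cmod (lam j) < R"
  shows "((\<lambda>s. z * exp (lam k * z * (1 - of_real s)) * Q lam k R (of_real s * z)) has_integral
          (Q lam (Suc k) R z - exp (lam k * z) * Q lam (Suc k) R 0)) {0..1}"
proof -
  have a1: "\<forall>j<Suc k. cmod (lam j) < R" using assms by (simp add: less_Suc_eq_le)
  define D where "D \<zeta> = integral {0..1} (\<lambda>t. (of_real R * ee t) * ig lam (Suc k) R \<zeta> t)" for \<zeta>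
  have dQ: "(Q lam (Suc k) R has_field_derivative D \<zeta>) (at \<zeta>)" for \<zeta> using Q_deriv[OF a1] D_def by simp
  have ode: "D \<zeta> - lam k * Q lam (Suc k) R \<zeta> = Q lam k R \<zeta>" for \<zeta> using Q_ode[OF a1] D_def by simp
  define K where "K s = exp (lam k * z * (1 - of_real s)) * Q lam (Suc k) R (of_real s * z)" for s
  have "(K has_vector_derivative z * exp (lam k * z * (1 - of_real s)) * Q lam k R (of_real s * z))
          (at s within {0..1})" for s
  proof (rule vd_cx[where f = "\<lambda>u. exp (lam k * z * (1 - u)) * Q lam (Suc k) R (u * z)"])
    have inner: "((\<lambda>u. u * z) has_field_derivative z) (at (of_real s))" by (auto intro!: derivative_eq_intros)
    have qd: "((\<lambda>u. Q lam (Suc k) R (u * z)) has_field_derivative D (of_real s * z) * z) (at (of_real s))"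
      using DERIV_chain2[OF dQ inner] .
    have ed: "((\<lambda>u. exp (lam k * z * (1 - u))) has_field_derivative
               exp (lam k * z * (1 - of_real s)) * (- (lam k * z))) (at (of_real s))"
      by (auto intro!: derivative_eq_intros)
    define E where "E = exp (lam k * z * (1 - of_real s))"
    have "E * (D (of_real s * z) * z) + E * (- (lam k * z)) * Q lam (Suc k) R (of_real s * z)
        = z * E * (D (of_real s * z) - lam k * Q lam (Suc k) R (of_real s * z))"
      by (simp add: algebra_simps)
    also have "\<dots> = z * E * Q lam k R (of_real s * z)" by (simp add: ode)
    finally have val: "E * (D (of_real s * z) * z) + E * (- (lam k * z)) * Q lam (Suc k) R (of_real s * z)
        = z * E * Q lam k R (of_real s * z)" .
    show "((\<lambda>u. exp (lam k * z * (1 - u)) * Q lam (Suc k) R (u * z)) has_field_derivative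
           z * exp (lam k * z * (1 - of_real s)) * Q lam k R (of_real s * z)) (at (of_real s))"
      using DERIV_mult'[OF ed qd] val unfolding E_def by simp
  next
    fix x show "K x = exp (lam k * z * (1 - of_real x)) * Q lam (Suc k) R (of_real x * z)"
      by (simp add: K_def)
  qed
  then have "((\<lambda>s. z * exp (lam k * z * (1 - of_real s)) * Q lam k R (of_real s * z)) has_integral (K 1 - K 0)) {0..1}"
    by (intro fundamental_theorem_of_calculus) auto
  then show ?thesis by (simp add: K_def)
qed

definition FF :: "real \<Rightarrow> real \<Rightarrow> nat \<Rightarrow> real \<Rightarrow> real" where
  "FF a b k r = exp (a * r) * (exp (b * r) - 1) ^ k / (b ^ k * fact k)"

lemma FF_int:
  assumes "b > 0"
  shows "((\<lambda>s. r * exp ((a + b * real (Suc k)) * r * (1 - s)) * FF a b k (s * r)) has_integral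
           FF a b (Suc k) r) {0..1}"
proof -
  define c where "c = a + b * real (Suc k)"
  define N where "N = b ^ Suc k * fact (Suc k)"
  have Np: "N > 0" using assms by (simp add: N_def)
  define C where "C = exp (c * r) / N"
  define K where "K s = C * (1 - exp (- (b * s * r))) ^ Suc k" for s
  define K' where "K' s = C * ((1 + real k) * ((exp (- (b * s * r)) * (b * r)) * (1 - exp (- (b * s * r))) ^ k))" for s
  have kd: "(K has_vector_derivative K' s) (at s within {0..1})" for s
  proof -
    have u: "((\<lambda>s. 1 - exp (- (b * s * r))) has_real_derivative exp (- (b * s * r)) * (b * r)) (at s within {0..1})"
      by (auto intro!: derivative_eq_intros)
    have "(K has_real_derivative K' s) (at s within {0..1})"
      unfolding K_def K'_def by (intro DERIV_cmult DERIV_power_Suc u)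
    then show ?thesis by (simp add: has_real_derivative_iff_has_vector_derivative)
  qed
  have eq: "K' s = r * exp (c * r * (1 - s)) * FF a b k (s * r)" for s
  proof -
    define X where "X = exp (- (b * s * r))"
    define E where "E = exp (b * s * r)"
    have EX: "E * X = 1" unfolding E_def X_def by (simp add: exp_minus field_simps)
    have e1: "exp (c * r * (1 - s)) * exp (a * (s * r)) = exp (c * r) * X ^ Suc k"
    proof -
      have "exp (c * r * (1 - s)) * exp (a * (s * r)) = exp (c * r + real (Suc k) * (- (b * s * r)))"
        unfolding exp_add[symmetric] c_def by (simp add: algebra_simps)
      also have "\<dots> = exp (c * r) * X ^ Suc k" unfolding exp_add X_def exp_of_nat_mult ..
      finally show ?thesis .
    qed
    have e2: "(E - 1) ^ k * X ^ k = (1 - X) ^ k"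
      unfolding power_mult_distrib[symmetric] using EX by (simp add: algebra_simps)
    have "r * exp (c * r * (1 - s)) * FF a b k (s * r)
        = r * (exp (c * r * (1 - s)) * exp (a * (s * r))) * (E - 1) ^ k / (b ^ k * fact k)"
      by (simp add: FF_def E_def mult_ac)
    also have "\<dots> = r * exp (c * r) * X * ((E - 1) ^ k * X ^ k) / (b ^ k * fact k)"
      unfolding e1 by (simp add: mult_ac)
    also have "\<dots> = r * exp (c * r) * X * (1 - X) ^ k / (b ^ k * fact k)" unfolding e2 ..
    also have "\<dots> = K' s"
    proof -
      define M where "M = 1 + real k"
      have M0: "M > 0" by (simp add: M_def)
      have fS: "(fact (Suc k) :: real) = M * fact k" by (simp add: M_def fact_Suc)
      have fk: "(fact k :: real) > 0" by simp
      show ?thesis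
        unfolding K'_def C_def N_def X_def[symmetric] M_def[symmetric] fS power_Suc
        using assms M0 fk by (simp add: field_simps)
    qed
    finally show ?thesis by simp
  qed
  have "(K' has_integral (K 1 - K 0)) {0..1}"
    using kd by (intro fundamental_theorem_of_calculus) auto
  moreover have "K 1 - K 0 = FF a b (Suc k) r"
  proof -
    define Y where "Y = exp (- (b * r))"
    have EY: "exp (b * r) * Y = 1" unfolding Y_def by (simp add: exp_minus field_simps)
    have "exp (c * r) = exp (a * r) * exp (b * r) ^ Suc k"
      unfolding c_def exp_of_nat_mult[symmetric] exp_add[symmetric] by (simp add: algebra_simps)
    then have "K 1 = exp (a * r) * (exp (b * r) * (1 - Y)) ^ Suc k / N"
      unfolding K_def C_def Y_def power_mult_distrib by (simp add: mult_ac)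
    also have "exp (b * r) * (1 - Y) = exp (b * r) - 1" using EY by (simp add: algebra_simps)
    finally have "K 1 = FF a b (Suc k) r" by (simp add: FF_def N_def)
    moreover have "K 0 = 0" by (simp add: K_def)
    ultimately show ?thesis by simp
  qed
  moreover have "K' = (\<lambda>s. r * exp (c * r * (1 - s)) * FF a b k (s * r))" by (rule ext) (rule eq)
  ultimately show ?thesis unfolding c_def by simp
qed


lemma Q_bound:
  assumes a0: "a \<ge> 0" and b0: "b > 0" and lb: "\<forall>j. cmod (lam j) \<le> a + b * real j"
  shows "\<forall>j\<le>k. cmod (lam j) < R \<Longrightarrow> cmod (Q lam (Suc k) R z) \<le> FF a b k (cmod z)"
proof (induction k arbitrary: z)
  case 0
  have "((\<lambda>s. z * exp (lam 0 * z * (1 - of_real s)) * Q lam 0 R (of_real s * z)) has_integral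
          (Q lam (Suc 0) R z - exp (lam 0 * z) * Q lam (Suc 0) R 0)) {0..1}"
    using Q_repr[OF 0(1)] by simp
  then have "Q lam (Suc 0) R z - exp (lam 0 * z) * Q lam (Suc 0) R 0 = 0" by (simp add: Q_zero)
  moreover have "Q lam (Suc 0) R 0 = 1" using Q_at0[OF 0(1)] by simp
  ultimately have eq: "Q lam (Suc 0) R z = exp (lam 0 * z)" by simp
  have "Re (lam 0 * z) \<le> cmod (lam 0 * z)" by (rule complex_Re_le_cmod)
  also have "\<dots> = cmod (lam 0) * cmod z" by (simp add: norm_mult)
  also have "\<dots> \<le> a * cmod z" using lb[rule_format, of 0] by (intro mult_right_mono) auto
  finally have "exp (Re (lam 0 * z)) \<le> exp (a * cmod z)" by simp
  then show ?case by (simp add: eq FF_def)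
next
  case (Suc k)
  have p: "\<forall>j\<le>k. cmod (lam j) < R" using Suc.prems by auto
  have IH: "cmod (Q lam (Suc k) R w) \<le> FF a b k (cmod w)" for w using Suc.IH[OF p] .
  have hi: "((\<lambda>s. z * exp (lam (Suc k) * z * (1 - of_real s)) * Q lam (Suc k) R (of_real s * z)) has_integral
          Q lam (Suc (Suc k)) R z) {0..1}"
    using Q_repr[OF Suc.prems, of z] Q_at0[OF Suc.prems] by simp
  have hg: "((\<lambda>s. cmod z * exp ((a + b * real (Suc k)) * cmod z * (1 - s)) * FF a b k (s * cmod z)) has_integral
           FF a b (Suc k) (cmod z)) {0..1}"
    using FF_int[OF b0, of "cmod z" a k] .
  have pw: "cmod (z * exp (lam (Suc k) * z * (1 - of_real s)) * Q lam (Suc k) R (of_real s * z))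
        \<le> cmod z * exp ((a + b * real (Suc k)) * cmod z * (1 - s)) * FF a b k (s * cmod z)"
    if s: "s \<in> {0..1}" for s
  proof -
    define w where "w = lam (Suc k) * z * (1 - of_real s)"
    have o: "1 - complex_of_real s = of_real (1 - s)" by simp
    have n1: "cmod (1 - complex_of_real s) = 1 - s" unfolding o norm_of_real using s by simp
    have cw: "cmod w = cmod (lam (Suc k)) * (cmod z * (1 - s))"
      unfolding w_def norm_mult n1 by simp
    have "Re w \<le> cmod w" by (rule complex_Re_le_cmod)
    also have "\<dots> \<le> (a + b * real (Suc k)) * (cmod z * (1 - s))"
      unfolding cw using lb[rule_format, of "Suc k"] s by (intro mult_right_mono) auto
    finally have e: "exp (Re w) \<le> exp ((a + b * real (Suc k)) * cmod z * (1 - s))" by (simp add: mult_ac)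
    have "cmod (of_real s * z) = s * cmod z" using s by (simp add: norm_mult)
    then have q: "cmod (Q lam (Suc k) R (of_real s * z)) \<le> FF a b k (s * cmod z)" using IH by metis
    have "cmod (z * exp w * Q lam (Suc k) R (of_real s * z))
        = cmod z * exp (Re w) * cmod (Q lam (Suc k) R (of_real s * z))" by (simp add: norm_mult)
    also have "\<dots> \<le> cmod z * exp ((a + b * real (Suc k)) * cmod z * (1 - s)) * FF a b k (s * cmod z)"
      using e q by (intro mult_mono mult_left_mono) auto
    finally show ?thesis by (simp add: w_def)
  qed
  have "cmod (integral {0..1} (\<lambda>s. z * exp (lam (Suc k) * z * (1 - of_real s)) * Q lam (Suc k) R (of_real s * z)))
      \<le> integral {0..1} (\<lambda>s. cmod z * exp ((a + b * real (Suc k)) * cmod z * (1 - s)) * FF a b k (s * cmod z))"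
    using hi hg pw by (intro integral_norm_bound_integral) auto
  then show ?case using integral_unique[OF hi] integral_unique[OF hg] by simp
qed


lemma lin_bound:
  fixes lam :: "nat \<Rightarrow> complex"
  assumes "limsup (\<lambda>n. ereal (cmod (lam n) / real n)) \<le> ereal \<beta>" "b > \<beta>" "b > 0"
  shows "\<exists>a\<ge>0. \<forall>j. cmod (lam j) \<le> a + b * real j"
proof -
  have "limsup (\<lambda>n. ereal (cmod (lam n) / real n)) < ereal b" using assms by (simp add: le_less_trans)
  from Limsup_lessD[OF this] obtain N where N: "\<And>n. n \<ge> N \<Longrightarrow> cmod (lam n) / real n < b"
    by (auto simp: eventually_sequentially)
  define N' where "N' = max N 1"
  define a where "a = (\<Sum>j<N'. cmod (lam j))"
  have a0: "a \<ge> 0" by (simp add: a_def sum_nonneg)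
  have "cmod (lam j) \<le> a + b * real j" for j
  proof (cases "j < N'")
    case True
    have "cmod (lam j) \<le> a" unfolding a_def using True by (intro member_le_sum) auto
    moreover have "b * real j \<ge> 0" using assms(3) by simp
    ultimately show ?thesis by linarith
  next
    case False
    then have j: "j \<ge> N" "j \<ge> 1" by (auto simp: N'_def)
    then have "cmod (lam j) / real j < b" using N by simp
    then have "cmod (lam j) < b * real j" using j by (simp add: divide_less_eq)
    then show ?thesis using a0 by linarith
  qed
  then show ?thesis using a0 by blast
qed

lemma fund_eq: "fund_fun lam n z = Q lam (Suc n) (fund_radius lam n) z"
proof -
  define R where "R = fund_radius lam n"
  define c where "c = 2 * complex_of_real pi * \<i>"
  have c0: "c \<noteq> 0" by (simp add: c_def)
  have i: "(let w = of_real R * exp (2 * complex_of_real pi * \<i> * complex_of_real t) in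
          exp (z * w) / (\<Prod>j\<le>n. w - lam j) * (2 * of_real pi * \<i> * w)) = ig lam (Suc n) R z t * c" for t
    by (simp add: ig_def PP_def ee_def lessThan_Suc_atMost Let_def c_def mult_ac)
  have "fund_fun lam n z = (1 / c) * integral {0..1} (\<lambda>t. let w = of_real R * exp (2 * complex_of_real pi * \<i> * complex_of_real t) in
          exp (z * w) / (\<Prod>j\<le>n. w - lam j) * (2 * of_real pi * \<i> * w))"
    unfolding fund_fun_def R_def c_def by (simp only: Let_def)
  also have "\<dots> = 1 / c * integral {0..1} (\<lambda>t. ig lam (Suc n) R z t * c)"
    by (intro arg_cong[where f = "\<lambda>x. (1 / c) * x"] integral_cong i)
  also have "\<dots> = Q lam (Suc n) R z" using c0 by (simp add: Q_def)
  finally show ?thesis by (simp add: R_def)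
qed

lemma fund_radius_gt:
  assumes "j \<le> n" shows "cmod (lam j) < fund_radius lam n"
proof -
  have "cmod (lam j) \<le> Max ((\<lambda>j. cmod (lam j)) ` {..n})" using assms by (intro Max_ge) auto
  then show ?thesis by (simp add: fund_radius_def)
qed

theorem mainTheorem6:
  fixes \<beta> :: real and lam :: "nat \<Rightarrow> complex"
  assumes "\<beta> > 0"
    and "limsup (\<lambda>n. ereal (cmod (lam n) / real n)) \<le> ereal \<beta>"
  shows "(\<forall>\<epsilon>>0. \<exists>\<alpha>>0. \<forall>(n::nat) (z::complex).
            fact n * cmod (fund_fun lam n z)
              \<le> exp (\<alpha> * cmod z) *
                 ((exp ((1 + \<epsilon>) * \<beta> * cmod z) - 1) / ((1 + \<epsilon>) * \<beta>)) ^ n)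
       \<and> (\<forall>z::complex. limsup (\<lambda>n. ereal (root n (fact n * cmod (fund_fun lam n z))))
              \<le> ereal ((exp (\<beta> * cmod z) - 1) / \<beta>))"
proof -
  have part1: "\<exists>\<alpha>>0. \<forall>(n::nat) (z::complex).
            fact n * cmod (fund_fun lam n z)
              \<le> exp (\<alpha> * cmod z) *
                 ((exp ((1 + \<epsilon>) * \<beta> * cmod z) - 1) / ((1 + \<epsilon>) * \<beta>)) ^ n" if \<epsilon>: "\<epsilon> > 0" for \<epsilon>
  proof -
    define b where "b = (1 + \<epsilon>) * \<beta>"
    have b\<beta>: "b > \<beta>" using \<epsilon> assms(1) by (simp add: b_def algebra_simps)
    then have b0: "b > 0" using assms(1) by simp
    obtain a where a0: "a \<ge> 0" and lb: "\<forall>j. cmod (lam j) \<le> a + b * real j"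
      using lin_bound[OF assms(2) b\<beta> b0] by blast
    have "fact n * cmod (fund_fun lam n z) \<le> exp ((a + 1) * cmod z) * ((exp (b * cmod z) - 1) / b) ^ n" for n z
    proof -
      have "\<forall>j\<le>n. cmod (lam j) < fund_radius lam n" using fund_radius_gt by blast
      from Q_bound[OF a0 b0 lb this, of z]
      have "cmod (fund_fun lam n z) \<le> FF a b n (cmod z)" by (simp add: fund_eq)
      then have "fact n * cmod (fund_fun lam n z) \<le> fact n * FF a b n (cmod z)"
        by (intro mult_left_mono) auto
      also have "\<dots> = exp (a * cmod z) * ((exp (b * cmod z) - 1) / b) ^ n"
        by (simp add: FF_def power_divide)
      also have "\<dots> \<le> exp ((a + 1) * cmod z) * ((exp (b * cmod z) - 1) / b) ^ n"
      proof (rule mult_right_mono)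
        show "exp (a * cmod z) \<le> exp ((a + 1) * cmod z)" by (simp add: algebra_simps)
        have "exp (b * cmod z) \<ge> 1" using b0 by simp
        then show "0 \<le> ((exp (b * cmod z) - 1) / b) ^ n" using b0 by simp
      qed
      finally show ?thesis .
    qed
    then show ?thesis using a0 unfolding b_def by (intro exI[of _ "a + 1"]) auto
  qed
  have part2: "limsup (\<lambda>n. ereal (root n (fact n * cmod (fund_fun lam n z))))
              \<le> ereal ((exp (\<beta> * cmod z) - 1) / \<beta>)" for z
  proof -
    define h where "h \<epsilon> = (exp ((1 + \<epsilon>) * \<beta> * cmod z) - 1) / ((1 + \<epsilon>) * \<beta>)" for \<epsilon>
    have le: "limsup (\<lambda>n. ereal (root n (fact n * cmod (fund_fun lam n z)))) \<le> ereal (h \<epsilon>)"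
      if \<epsilon>: "\<epsilon> > 0" for \<epsilon>
    proof -
      obtain \<alpha> where \<alpha>: "\<alpha> > 0" and bd: "\<And>n. fact n * cmod (fund_fun lam n z) \<le> exp (\<alpha> * cmod z) * h \<epsilon> ^ n"
        using part1[OF \<epsilon>] unfolding h_def by blast
      have h0: "h \<epsilon> \<ge> 0"
      proof -
        have "exp ((1 + \<epsilon>) * \<beta> * cmod z) \<ge> 1" using \<epsilon> assms(1) by simp
        then show ?thesis unfolding h_def using \<epsilon> assms(1) by simp
      qed
      have ev: "eventually (\<lambda>n. ereal (root n (fact n * cmod (fund_fun lam n z)))
                   \<le> ereal (root n (exp (\<alpha> * cmod z)) * h \<epsilon>)) sequentially"
        using eventually_gt_at_top[of 0]
      proof eventually_elim
        case (elim n)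
        have "root n (fact n * cmod (fund_fun lam n z)) \<le> root n (exp (\<alpha> * cmod z) * h \<epsilon> ^ n)"
          using bd[of n] elim by (subst real_root_le_iff) auto
        also have "\<dots> = root n (exp (\<alpha> * cmod z)) * h \<epsilon>"
          using elim h0 by (simp add: real_root_mult real_root_power_cancel)
        finally show ?case by simp
      qed
      have "(\<lambda>n. root n (exp (\<alpha> * cmod z)) * h \<epsilon>) \<longlonglongrightarrow> 1 * h \<epsilon>"
        by (intro tendsto_intros LIMSEQ_root_const) simp
      then have lim: "(\<lambda>n. ereal (root n (exp (\<alpha> * cmod z)) * h \<epsilon>)) \<longlonglongrightarrow> ereal (h \<epsilon>)" by simp
      have "limsup (\<lambda>n. ereal (root n (fact n * cmod (fund_fun lam n z))))
            \<le> limsup (\<lambda>n. ereal (root n (exp (\<alpha> * cmod z)) * h \<epsilon>))"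
        by (rule Limsup_mono[OF ev])
      also have "\<dots> = ereal (h \<epsilon>)" by (rule lim_imp_Limsup[OF _ lim]) simp
      finally show ?thesis .
    qed
    have "(h \<longlongrightarrow> (exp ((1 + 0) * \<beta> * cmod z) - 1) / ((1 + 0) * \<beta>)) (at_right 0)"
      unfolding h_def using assms(1) by (intro tendsto_intros) auto
    then have "((\<lambda>\<epsilon>. ereal (h \<epsilon>)) \<longlongrightarrow> ereal ((exp (\<beta> * cmod z) - 1) / \<beta>)) (at_right 0)" by simp
    then show ?thesis
    proof (rule tendsto_lowerbound)
      show "\<forall>\<^sub>F \<epsilon> in at_right 0. limsup (\<lambda>n. ereal (root n (fact n * cmod (fund_fun lam n z)))) \<le> ereal (h \<epsilon>)"
        using eventually_at_right_less[of "0::real"] by eventually_elim (rule le)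
    qed simp
  qed
  show ?thesis using part1 part2 by blast
qed

end
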